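(* There exists no structure $\mathbf{E}=(\{0,1\},\mathcal R)$ (a structure with universe $\{0,1\}$ in some countable first-order language) such that $(\mathbf{S}_0,\mathbf{E})$ is a dual pair.
   Context: $\mathbf{S}_0=(\{0,1\},\beta)$ where $\beta$ is the ternary relation with $\beta(x,y,z)$ iff ($x=z=1\implies y=1$). A structure is $\mathbf{D}$-separated if it embeds (injective homomorphism preserving and reflecting all relations) into a power of $\mathbf{D}$. Semi-dual pair: for finite models $\mathbf{D}$, $\mathbf{E}$ of countable languages $\mathcal L,\mathcal R$ with the same universe, $(\mathbf{D},\mathbf{E})$ is a semi-dual pair if for every finite $\mathbf{D}$-separated $\mathbf{X}$ with universe $X$: (S1) the set $\hom(\mathbf{X},\mathbf{D})$ of homomorphisms is a substructure of $\mathbf{E}^X$; (S2) for every homomorphism $\phi$ from $\hom(\mathbf{X},\mathbf{D})$ (with the $\mathcal R$-structure induced from $\mathbf{E}^X$) into $\mathbf{E}$ there is $x\in X$ with $\phi(f)=f(x)$ for all $f\in\hom(\mathbf{X},\mathbf{D})$. $(\mathbf{D},\mathbf{E})$ is a dual pair if both $(\mathbf{D},\mathbf{E})$ and $(\mathbf{E},\mathbf{D})$ are semi-dual pairs. *)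

theory Defs
  imports "HOL-Library.FuncSet"
begin

text \<open>A first-order language: relation symbols and function symbols (both drawn
from nat, so every language is countable), with arities.\<close>
record lang =
  rsyms :: "nat set"
  rar   :: "nat \<Rightarrow> nat"
  fsyms :: "nat set"
  far   :: "nat \<Rightarrow> nat"

record 'a struct =
  carrier :: "'a set"
  rels    :: "nat \<Rightarrow> 'a list \<Rightarrow> bool"
  funs    :: "nat \<Rightarrow> 'a list \<Rightarrow> 'a"

definition is_struct :: "lang \<Rightarrow> 'a struct \<Rightarrow> bool" where
  "is_struct L A \<longleftrightarrow> carrier A \<noteq> {} \<and>
     (\<forall>f\<in>fsyms L. \<forall>xs. length xs = far L f \<and> set xs \<subseteq> carrier A \<longrightarrow> funs A f xs \<in> carrier A)"

definition is_hom :: "lang \<Rightarrow> 'a struct \<Rightarrow> 'b struct \<Rightarrow> ('a \<Rightarrow> 'b) \<Rightarrow> bool" where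
  "is_hom L A B h \<longleftrightarrow> h \<in> carrier A \<rightarrow> carrier B \<and>
     (\<forall>r\<in>rsyms L. \<forall>xs. length xs = rar L r \<and> set xs \<subseteq> carrier A \<and> rels A r xs
          \<longrightarrow> rels B r (map h xs)) \<and>
     (\<forall>f\<in>fsyms L. \<forall>xs. length xs = far L f \<and> set xs \<subseteq> carrier A
          \<longrightarrow> h (funs A f xs) = funs B f (map h xs))"

definition is_embedding :: "lang \<Rightarrow> 'a struct \<Rightarrow> 'b struct \<Rightarrow> ('a \<Rightarrow> 'b) \<Rightarrow> bool" where
  "is_embedding L A B h \<longleftrightarrow> is_hom L A B h \<and> inj_on h (carrier A) \<and>
     (\<forall>r\<in>rsyms L. \<forall>xs. length xs = rar L r \<and> set xs \<subseteq> carrier A \<and> rels B r (map h xs)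
          \<longrightarrow> rels A r xs)"

definition power :: "'a struct \<Rightarrow> 'i set \<Rightarrow> ('i \<Rightarrow> 'a) struct" where
  "power B I = \<lparr> carrier = I \<rightarrow>\<^sub>E carrier B,
      rels = (\<lambda>r fs. \<forall>i\<in>I. rels B r (map (\<lambda>g. g i) fs)),
      funs = (\<lambda>f fs. restrict (\<lambda>i. funs B f (map (\<lambda>g. g i) fs)) I) \<rparr>"

definition homs :: "lang \<Rightarrow> 'a struct \<Rightarrow> 'b struct \<Rightarrow> ('a \<Rightarrow> 'b) set" where
  "homs L X D = {h \<in> carrier X \<rightarrow>\<^sub>E carrier D. is_hom L X D h}"

definition substructure :: "lang \<Rightarrow> 'a struct \<Rightarrow> 'a set \<Rightarrow> bool" where
  "substructure L A S \<longleftrightarrow> S \<subseteq> carrier A \<and>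
     (\<forall>f\<in>fsyms L. \<forall>xs. length xs = far L f \<and> set xs \<subseteq> S \<longrightarrow> funs A f xs \<in> S)"

definition induced :: "'a struct \<Rightarrow> 'a set \<Rightarrow> 'a struct" where
  "induced A S = A\<lparr> carrier := S \<rparr>"

text \<open>D-separated: embeds into some power of D (index sets in nat suffice for finite X).\<close>
definition separated :: "lang \<Rightarrow> 'a struct \<Rightarrow> 'b struct \<Rightarrow> bool" where
  "separated L D X \<longleftrightarrow> (\<exists>(I::nat set) h. is_embedding L X (power D I) h)"

text \<open>Semi-dual pair; finite D-separated structures X are taken with universe a
(finite) subset of nat, which covers all of them up to isomorphism.\<close>
definition semi_dual_pair :: "lang \<Rightarrow> 'a struct \<Rightarrow> lang \<Rightarrow> 'a struct \<Rightarrow> bool" where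
  "semi_dual_pair L D R E \<longleftrightarrow>
     (\<forall>X :: nat struct. is_struct L X \<and> finite (carrier X) \<and> separated L D X \<longrightarrow>
        substructure R (power E (carrier X)) (homs L X D) \<and>
        (\<forall>\<phi>. is_hom R (induced (power E (carrier X)) (homs L X D)) E \<phi> \<longrightarrow>
              (\<exists>x\<in>carrier X. \<forall>f\<in>homs L X D. \<phi> f = f x)))"

definition dual_pair :: "lang \<Rightarrow> 'a struct \<Rightarrow> lang \<Rightarrow> 'a struct \<Rightarrow> bool" where
  "dual_pair L D R E \<longleftrightarrow> semi_dual_pair L D R E \<and> semi_dual_pair R E L D"

definition L0 :: lang where
  "L0 = \<lparr> rsyms = {0}, rar = (\<lambda>_. 3), fsyms = {}, far = (\<lambda>_. 0) \<rparr>"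

definition S0 :: "nat struct" where
  "S0 = \<lparr> carrier = {0, 1},
      rels = (\<lambda>r xs. case xs of [x, y, z] \<Rightarrow> (x = 1 \<and> z = 1 \<longrightarrow> y = 1) | _ \<Rightarrow> False),
      funs = (\<lambda>_ _. 0) \<rparr>"

end

theory Submission
  imports Defs
begin
definition bt :: "nat \<Rightarrow> nat \<Rightarrow> nat" where "bt n j = n div 2^j mod 2"
definition enc4 :: "(nat \<Rightarrow> nat) \<Rightarrow> nat" where "enc4 v = v 0 + 2 * v 1 + 4 * v 2 + 8 * v 3"
definition enc5 :: "(nat \<Rightarrow> nat) \<Rightarrow> nat" where "enc5 v = enc4 v + 16 * v 4"

lemma bt01: "bt n j \<in> {0,1}" by (auto simp: bt_def)

lemma enc4_bt: "n < 16 \<Longrightarrow> enc4 (bt n) = n"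
proof -
  assume "n < 16" then have "n \<in> {0,1,2,3,4,5,6,7,8,9,10,11,12,13,14,15}" by (simp only: insert_iff empty_iff) presburger
  then show ?thesis unfolding enc4_def bt_def by (elim insertE) auto
qed

lemma bt_enc4:
  assumes "v 0 \<in> {0,1}" "v 1 \<in> {0,1}" "v 2 \<in> {0,1}" "v 3 \<in> {0,1}"
  shows "enc4 v < 16 \<and> (\<forall>j<4. bt (enc4 v) j = v j)"
proof -
  have "\<forall>j::nat<4. j \<in> {0,1,2,3}" by auto
  with assms show ?thesis by (auto simp: enc4_def bt_def)
qed

lemma bt_enc5:
  assumes "v 0 \<in> {0,1}" "v 1 \<in> {0,1}" "v 2 \<in> {0,1}" "v 3 \<in> {0,1}" "v 4 \<in> {0,1}"
  shows "enc5 v < 32 \<and> (\<forall>j<5. bt (enc5 v) j = v j)"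
proof -
  have "\<forall>j::nat<5. j \<in> {0,1,2,3,4}" by auto
  with assms show ?thesis by (auto simp: enc5_def enc4_def bt_def)
qed

definition valid :: "(nat \<Rightarrow> nat) \<Rightarrow> bool" where
 "valid g \<longleftrightarrow> (g 0 = 1 \<and> g 1 = 1 \<longrightarrow> g 4 = 1) \<and> (g 4 = 1 \<and> g 2 = 1 \<longrightarrow> g 3 = 1)"
definition I5 :: "nat set" where "I5 = {i. i < 32 \<and> valid (bt i)}"
definition C5 :: "nat set" where "C5 = {0..4}"
definition J4 :: "nat set" where "J4 = {0..3}"
definition CX :: "nat set" where "CX = {n. n < 16 \<and> n \<noteq> 7}"
definition e5 :: "nat \<Rightarrow> nat \<Rightarrow> nat" where "e5 x = restrict (\<lambda>i. bt i x) I5"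
definition X5 :: "nat struct" where
 "X5 = \<lparr>carrier = C5, rels = (\<lambda>r xs. rels (power S0 I5) r (map e5 xs)), funs = (\<lambda>_ _. 0)\<rparr>"

lemma C5_eq: "C5 = {0,1,2,3,4}" by (auto simp: C5_def)
lemma J4_eq: "J4 = {0,1,2,3}" by (auto simp: J4_def)

lemma rels_S0: "rels S0 r [a,b,c] = (a = 1 \<and> c = 1 \<longrightarrow> b = 1)" by (simp add: S0_def)
lemma carrier_S0: "carrier S0 = {0,1}" by (simp add: S0_def)

lemma X5_rel: "set xs \<subseteq> C5 \<Longrightarrow> rels X5 r xs \<longleftrightarrow> (\<forall>i\<in>I5. rels S0 r (map (bt i) xs))"
proof -
  have "rels X5 r xs = (\<forall>i\<in>I5. rels S0 r (map ((\<lambda>g. g i) \<circ> e5) xs))"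
    by (simp add: X5_def power_def)
  also have "\<dots> = (\<forall>i\<in>I5. rels S0 r (map (bt i) xs))"
    by (rule ball_cong[OF refl]) (simp add: e5_def comp_def)
  finally show ?thesis .
qed

lemma valid_cong: "(\<forall>x\<in>C5. g x = h x) \<Longrightarrow> valid g = valid h"
  by (simp add: valid_def C5_eq)

lemma enc5_I5:
  assumes "g \<in> C5 \<rightarrow>\<^sub>E {0,1}" "valid g"
  shows "enc5 g \<in> I5 \<and> (\<forall>x\<in>C5. bt (enc5 g) x = g x)"
proof -
  have v: "g 0 \<in> {0,1}" "g 1 \<in> {0,1}" "g 2 \<in> {0,1}" "g 3 \<in> {0,1}" "g 4 \<in> {0,1}"
    using assms(1) by (auto simp: C5_eq)
  from bt_enc5[OF v] have a: "enc5 g < 32" "\<forall>j<5. bt (enc5 g) j = g j" by auto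
  then have b: "\<forall>x\<in>C5. bt (enc5 g) x = g x" by (auto simp: C5_def)
  then have "valid (bt (enc5 g))" using valid_cong[of "bt (enc5 g)" g] assms(2) by simp
  with a b show ?thesis by (simp add: I5_def)
qed

lemma homs_X5: "g \<in> homs L0 X5 S0 \<longleftrightarrow> g \<in> C5 \<rightarrow>\<^sub>E {0,1} \<and> valid g"
proof
  assume g: "g \<in> homs L0 X5 S0"
  then have g1: "g \<in> C5 \<rightarrow>\<^sub>E {0,1}" and hom: "is_hom L0 X5 S0 g"
    by (auto simp: homs_def X5_def carrier_S0)
  have r: "\<And>xs. length xs = 3 \<Longrightarrow> set xs \<subseteq> C5 \<Longrightarrow> rels X5 0 xs \<Longrightarrow> rels S0 0 (map g xs)"
    using hom by (auto simp: is_hom_def L0_def X5_def)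
  have "rels X5 0 [0,4,1]"
    by (subst X5_rel) (auto simp: C5_def I5_def valid_def rels_S0)
  then have 1: "rels S0 0 [g 0, g 4, g 1]" using r[of "[0,4,1]"] by (simp add: C5_def)
  have "rels X5 0 [4,3,2]"
    by (subst X5_rel) (auto simp: C5_def I5_def valid_def rels_S0)
  then have 2: "rels S0 0 [g 4, g 3, g 2]" using r[of "[4,3,2]"] by (simp add: C5_def)
  from 1 2 g1 show "g \<in> C5 \<rightarrow>\<^sub>E {0,1} \<and> valid g" by (simp add: valid_def rels_S0)
next
  assume g: "g \<in> C5 \<rightarrow>\<^sub>E {0,1} \<and> valid g"
  then obtain i where i: "i \<in> I5" "\<forall>x\<in>C5. bt i x = g x" using enc5_I5 by blast
  have "is_hom L0 X5 S0 g"
    unfolding is_hom_def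
  proof (intro conjI ballI allI impI)
    show "g \<in> carrier X5 \<rightarrow> carrier S0" using g by (simp add: X5_def carrier_S0 PiE_iff Pi_iff)
  next
    fix r xs assume "r \<in> rsyms L0" "length xs = rar L0 r \<and> set xs \<subseteq> carrier X5 \<and> rels X5 r xs"
    then have xs: "set xs \<subseteq> C5" "rels X5 r xs" by (auto simp: X5_def)
    then have "rels S0 r (map (bt i) xs)" using X5_rel i(1) by blast
    moreover have "map (bt i) xs = map g xs" using xs(1) i(2) by (auto intro: map_cong)
    ultimately show "rels S0 r (map g xs)" by simp
  next
    fix f xs assume "f \<in> fsyms L0" then show "g (funs X5 f xs) = funs S0 f (map g xs)"
      by (simp add: L0_def)
  qed
  then show "g \<in> homs L0 X5 S0" using g by (simp add: homs_def X5_def carrier_S0)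
qed

lemma X5_struct: "is_struct L0 X5" by (simp add: is_struct_def X5_def C5_def L0_def)
lemma X5_finite: "finite (carrier X5)" by (simp add: X5_def C5_def)

lemma X5_sep: "separated L0 S0 X5"
  unfolding separated_def
proof (intro exI)
  have inj: "inj_on e5 C5"
  proof
    fix x y assume xy: "x \<in> C5" "y \<in> C5" "e5 x = e5 y"
    have "2^x \<in> I5" 
    proof -
      have "x = 0 \<or> x = 1 \<or> x = 2 \<or> x = 3 \<or> x = 4" using xy(1) by (auto simp: C5_def)
      then show ?thesis by (elim disjE) (simp_all add: I5_def valid_def bt_def)
    qed
    then have "bt (2^x) x = bt (2^x) y" using fun_cong[OF xy(3), of "2^x"] by (simp add: e5_def)
    then show "x = y" 
    proof -
      have "x = 0 \<or> x = 1 \<or> x = 2 \<or> x = 3 \<or> x = 4" using xy(1) by (auto simp: C5_def)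
      moreover have "y = 0 \<or> y = 1 \<or> y = 2 \<or> y = 3 \<or> y = 4" using xy(2) by (auto simp: C5_def)
      ultimately show ?thesis using \<open>bt (2^x) x = bt (2^x) y\<close>
        by (elim disjE) (simp_all add: bt_def)
    qed
  qed
  show "is_embedding L0 X5 (power S0 I5) e5"
    unfolding is_embedding_def is_hom_def
  proof (intro conjI)
    show "e5 \<in> carrier X5 \<rightarrow> carrier (power S0 I5)"
      using bt01 by (auto simp: X5_def power_def e5_def carrier_S0)
    show "inj_on e5 (carrier X5)" using inj by (simp add: X5_def)
  qed (auto simp: X5_def L0_def)
qed

definition w4 :: "nat \<Rightarrow> nat \<Rightarrow> nat" where "w4 n = restrict (bt n) J4"
definition X4 :: "nat struct \<Rightarrow> nat struct" where
 "X4 E = \<lparr>carrier = CX, rels = (\<lambda>r ns. rels (power E J4) r (map w4 ns)),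
     funs = (\<lambda>f ns. enc4 (funs (power E J4) f (map w4 ns)))\<rparr>"
definition lift :: "nat \<Rightarrow> nat \<Rightarrow> nat" where
 "lift n = restrict (\<lambda>y. if y < 4 then bt n y else (if bt n 0 = 1 \<and> bt n 1 = 1 then 1 else 0)) C5"
definition proj :: "nat \<Rightarrow> nat \<Rightarrow> nat" where "proj j = restrict (\<lambda>n. bt n j) CX"

lemma enc4_7:
  assumes "v 0 \<in> {0,1}" "v 1 \<in> {0,1}" "v 2 \<in> {0,1}" "v 3 \<in> {0,1}" "enc4 v = 7"
  shows "v 0 = 1 \<and> v 1 = 1 \<and> v 2 = 1 \<and> v 3 = 0"
proof -
  from bt_enc4[OF assms(1-4)] have h: "\<forall>j<4. bt (enc4 v) j = v j" by simp
  then have e: "v 0 = bt 7 0" "v 1 = bt 7 1" "v 2 = bt 7 2" "v 3 = bt 7 3" using assms(5) by auto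
  have c: "bt 7 0 = 1" "bt 7 1 = 1" "bt 7 2 = 1" "bt 7 3 = 0" by (simp_all add: bt_def)
  show ?thesis unfolding e c by simp
qed

lemma lift_M5: "n \<in> CX \<Longrightarrow> lift n \<in> homs L0 X5 S0"
proof -
  assume n: "n \<in> CX"
  have e: "enc4 (bt n) = n" using n enc4_bt by (auto simp: CX_def)
  have "bt n 0 = 1 \<and> bt n 1 = 1 \<and> bt n 2 = 1 \<longrightarrow> bt n 3 = 1"
  proof
    assume a: "bt n 0 = 1 \<and> bt n 1 = 1 \<and> bt n 2 = 1"
    show "bt n 3 = 1"
    proof (rule ccontr)
      assume "bt n 3 \<noteq> 1" then have "bt n 3 = 0" using bt01[of n 3] by auto
      then have "enc4 (bt n) = 7" using a by (simp add: enc4_def)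
      with e n show False by (simp add: CX_def)
    qed
  qed
  moreover have l: "lift n 0 = bt n 0" "lift n 1 = bt n 1" "lift n 2 = bt n 2" "lift n 3 = bt n 3"
    "lift n 4 = (if bt n 0 = 1 \<and> bt n 1 = 1 then 1 else 0)" by (simp_all add: lift_def C5_def)
  ultimately have "valid (lift n)" by (simp add: valid_def)
  moreover have "lift n \<in> C5 \<rightarrow>\<^sub>E {0,1}"
    unfolding lift_def by (rule restrict_PiE_iff[THEN iffD2]) (use bt01 in auto)
  ultimately show ?thesis unfolding homs_X5 by simp
qed

lemma enc4_lift: "n \<in> CX \<Longrightarrow> enc4 (lift n) = n"
  using enc4_bt by (simp add: enc4_def lift_def C5_def CX_def)

lemma M5_enc4:
  assumes "g \<in> homs L0 X5 S0"
  shows "enc4 g \<in> CX \<and> (\<forall>j\<in>J4. bt (enc4 g) j = g j)"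
proof -
  from assms have g: "g \<in> C5 \<rightarrow>\<^sub>E {0,1}" "valid g" by (auto simp: homs_X5)
  have v: "g 0 \<in> {0,1}" "g 1 \<in> {0,1}" "g 2 \<in> {0,1}" "g 3 \<in> {0,1}"
    using g(1) by (auto simp: C5_eq)
  from bt_enc4[OF v] have a: "enc4 g < 16" "\<forall>j\<in>J4. bt (enc4 g) j = g j" by (auto simp: J4_def)
  have "enc4 g \<noteq> 7"
  proof
    assume "enc4 g = 7" from enc4_7[OF v this] g(2) show False by (simp add: valid_def)
  qed
  with a show ?thesis by (simp add: CX_def)
qed


definition M5 :: "(nat \<Rightarrow> nat) set" where "M5 = homs L0 X5 S0"

lemma power_simps:
  "carrier (power A I) = I \<rightarrow>\<^sub>E carrier A"
  "rels (power A I) r gs = (\<forall>i\<in>I. rels A r (map (\<lambda>g. g i) gs))"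
  "funs (power A I) f gs = restrict (\<lambda>i. funs A f (map (\<lambda>g. g i) gs)) I"
  by (simp_all add: power_def)

lemma induced_simps:
  "carrier (induced A S) = S" "rels (induced A S) = rels A" "funs (induced A S) = funs A"
  by (simp_all add: induced_def)

lemma enc4_cong: "(\<And>j. j < 4 \<Longrightarrow> u j = v j) \<Longrightarrow> enc4 u = enc4 v"
  by (simp add: enc4_def)

lemma len3: "length xs = 3 \<Longrightarrow> \<exists>a b c. xs = [a,b,c]"
  by (cases xs; cases "tl xs"; cases "tl (tl xs)") auto

lemma wit:
  assumes "a \<in> {0,1,2::nat}" "b \<in> {0,1,2::nat}"
  shows "\<exists>n\<in>CX. bt n a = 1 \<and> bt n b = 1 \<and> bt n 3 = 0"
proof -
  have "(if a = b then 2^a else 2^a + 2^b) \<in> CX \<and> bt (if a = b then 2^a else 2^a + 2^b) a = 1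
     \<and> bt (if a = b then 2^a else 2^a + 2^b) b = 1 \<and> bt (if a = b then 2^a else 2^a + 2^b) 3 = 0"
    using assms by (elim insertE emptyE) (simp_all add: bt_def CX_def)
  then show ?thesis by blast
qed

lemma proj_ne: "a \<in> {0,1,2} \<Longrightarrow> proj a \<noteq> proj 3"
proof
  assume a: "a \<in> {0,1,2}" and eq: "proj a = proj 3"
  have "proj a (2^a) = proj 3 (2^a)" using eq by simp
  then show False using a by (elim insertE emptyE) (simp_all add: proj_def bt_def CX_def)
qed

context
  fixes R :: lang and E :: "nat struct"
  assumes sE: "is_struct R E" and cE: "carrier E = {0,1}"
    and sd1: "semi_dual_pair L0 S0 R E" and sd2: "semi_dual_pair R E L0 S0"
begin

lemma sd1_X5: "substructure R (power E C5) M5 \<and>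
   (\<forall>\<phi>. is_hom R (induced (power E C5) M5) E \<phi> \<longrightarrow> (\<exists>x\<in>C5. \<forall>f\<in>M5. \<phi> f = f x))"
proof -
  have c: "carrier X5 = C5" by (simp add: X5_def)
  show ?thesis using sd1 X5_struct X5_finite X5_sep unfolding semi_dual_pair_def c[symmetric] M5_def
    by blast
qed

lemma S1: "f \<in> fsyms R \<Longrightarrow> length gs = far R f \<Longrightarrow> set gs \<subseteq> M5 \<Longrightarrow> funs (power E C5) f gs \<in> M5"
  using sd1_X5 unfolding substructure_def by blast

lemma S2: "is_hom R (induced (power E C5) M5) E \<psi> \<Longrightarrow> \<exists>x\<in>C5. \<forall>f\<in>M5. \<psi> f = f x"
  using sd1_X5 by blast

lemma clos:
  assumes f: "f \<in> fsyms R" and l: "length ns = far R f" and ns: "set ns \<subseteq> CX"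
  shows "funs (power E J4) f (map w4 ns) \<in> J4 \<rightarrow>\<^sub>E {0,1} \<and> enc4 (funs (power E J4) f (map w4 ns)) \<in> CX
     \<and> w4 (enc4 (funs (power E J4) f (map w4 ns))) = funs (power E J4) f (map w4 ns)"
proof -
  define V where "V = funs (power E J4) f (map w4 ns)"
  define G where "G = funs (power E C5) f (map lift ns)"
  have "set (map lift ns) \<subseteq> M5" using ns lift_M5 by (auto simp: M5_def)
  then have "G \<in> M5" unfolding G_def using S1[OF f] l by simp
  then have Gv: "G \<in> C5 \<rightarrow>\<^sub>E {0,1}" "valid G" by (auto simp: M5_def homs_X5)
  have GV: "G j = V j" if j: "j \<in> J4" for j
  proof -
    have "j \<in> C5" "j < 4" using j by (auto simp: J4_def C5_def)
    moreover have "map (\<lambda>n. lift n j) ns = map (\<lambda>n. w4 n j) ns"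
      using j \<open>j < 4\<close> \<open>j \<in> C5\<close> by (simp add: lift_def w4_def)
    ultimately show ?thesis using j by (simp add: G_def V_def power_simps comp_def cong: map_cong)
  qed
  have Vv: "V j \<in> {0,1}" if "j \<in> J4" for j
    using GV[OF that] PiE_mem[OF Gv(1), of j] that by (auto simp: J4_def C5_def)
  have VP: "V \<in> J4 \<rightarrow>\<^sub>E {0,1}" unfolding V_def power_simps
    by (rule restrict_PiE_iff[THEN iffD2]) (use Vv in \<open>auto simp: V_def power_simps\<close>)
  have v: "V 0 \<in> {0,1}" "V 1 \<in> {0,1}" "V 2 \<in> {0,1}" "V 3 \<in> {0,1}"
    using Vv by (auto simp: J4_def)
  from bt_enc4[OF v] have b: "enc4 V < 16" "\<forall>j<4. bt (enc4 V) j = V j" by auto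
  have "enc4 V \<noteq> 7"
  proof
    assume "enc4 V = 7"
    from enc4_7[OF v this] have "G 0 = 1 \<and> G 1 = 1 \<and> G 2 = 1 \<and> G 3 = 0"
      using GV by (simp add: J4_def)
    with Gv(2) show False by (simp add: valid_def)
  qed
  with b have c: "enc4 V \<in> CX" by (simp add: CX_def)
  have "w4 (enc4 V) = V"
  proof
    fix j show "w4 (enc4 V) j = V j"
    proof (cases "j \<in> J4")
      case True then show ?thesis using b by (simp add: w4_def J4_def)
    next
      case False then show ?thesis using VP by (simp add: w4_def PiE_def extensional_def)
    qed
  qed
  with VP c show ?thesis by (simp add: V_def)
qed


lemma X4_struct: "is_struct R (X4 E)"
  unfolding is_struct_def
proof (intro conjI ballI allI impI)
  have "(0::nat) \<in> CX" by (simp add: CX_def)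
  then show "carrier (X4 E) \<noteq> {}" by (auto simp: X4_def)
next
  fix f xs assume "f \<in> fsyms R" "length xs = far R f \<and> set xs \<subseteq> carrier (X4 E)"
  then show "funs (X4 E) f xs \<in> carrier (X4 E)" using clos by (simp add: X4_def)
qed

lemma X4_finite: "finite (carrier (X4 E))" by (simp add: X4_def CX_def)

lemma w4_in: "w4 n \<in> J4 \<rightarrow>\<^sub>E {0,1}"
  unfolding w4_def by (rule restrict_PiE_iff[THEN iffD2]) (use bt01 in auto)

lemma X4_sep: "separated R E (X4 E)"
  unfolding separated_def
proof (intro exI)
  have inj: "inj_on w4 CX"
  proof
    fix n m assume nm: "n \<in> CX" "m \<in> CX" "w4 n = w4 m"
    have "bt n j = bt m j" if "j < 4" for j
      using fun_cong[OF nm(3), of j] that by (simp add: w4_def J4_def)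
    then have "enc4 (bt n) = enc4 (bt m)" by (rule enc4_cong)
    then show "n = m" using nm(1,2) enc4_bt by (simp add: CX_def)
  qed
  show "is_embedding R (X4 E) (power E J4) w4"
    unfolding is_embedding_def is_hom_def
  proof (intro conjI)
    show "w4 \<in> carrier (X4 E) \<rightarrow> carrier (power E J4)" using w4_in by (simp add: power_simps cE)
    show "inj_on w4 (carrier (X4 E))" using inj by (simp add: X4_def)
    show "\<forall>f\<in>fsyms R. \<forall>xs. length xs = far R f \<and> set xs \<subseteq> carrier (X4 E) \<longrightarrow>
        w4 (funs (X4 E) f xs) = funs (power E J4) f (map w4 xs)"
      using clos by (simp add: X4_def)
  qed (auto simp: X4_def)
qed

definition "H4 = homs R (X4 E) E"

lemma sd2_X4: "is_hom L0 (induced (power S0 CX) H4) S0 \<phi> \<Longrightarrow> \<exists>x\<in>CX. \<forall>h\<in>H4. \<phi> h = h x"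
proof -
  have c: "carrier (X4 E) = CX" by (simp add: X4_def)
  assume "is_hom L0 (induced (power S0 CX) H4) S0 \<phi>"
  then show ?thesis using sd2 X4_struct X4_finite X4_sep unfolding semi_dual_pair_def c[symmetric] H4_def
    by blast
qed

lemma proj_H: "j \<in> J4 \<Longrightarrow> proj j \<in> H4"
proof -
  assume j: "j \<in> J4"
  have P: "proj j \<in> CX \<rightarrow>\<^sub>E {0,1}"
    unfolding proj_def by (rule restrict_PiE_iff[THEN iffD2]) (use bt01 in auto)
  have "is_hom R (X4 E) E (proj j)"
    unfolding is_hom_def
  proof (intro conjI ballI allI impI)
    show "proj j \<in> carrier (X4 E) \<rightarrow> carrier E" using P by (simp add: X4_def cE PiE_iff Pi_iff)
  next
    fix r xs assume "r \<in> rsyms R" "length xs = rar R r \<and> set xs \<subseteq> carrier (X4 E) \<and> rels (X4 E) r xs"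
    then have xs: "set xs \<subseteq> CX" "\<forall>i\<in>J4. rels E r (map (\<lambda>n. w4 n i) xs)"
      by (auto simp: X4_def power_simps comp_def)
    have "map (\<lambda>n. w4 n j) xs = map (proj j) xs" using xs(1) j by (auto simp: w4_def proj_def)
    then show "rels E r (map (proj j) xs)" using xs(2) j by metis
  next
    fix f xs assume f: "f \<in> fsyms R" and "length xs = far R f \<and> set xs \<subseteq> carrier (X4 E)"
    then have l: "length xs = far R f" and xs: "set xs \<subseteq> CX" by (auto simp: X4_def)
    note C = clos[OF f l xs]
    have "proj j (funs (X4 E) f xs) = w4 (enc4 (funs (power E J4) f (map w4 xs))) j"
      using conjunct1[OF conjunct2[OF C]] j by (simp add: X4_def proj_def w4_def)
    also have "\<dots> = funs (power E J4) f (map w4 xs) j" using C by simp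
    also have "\<dots> = funs E f (map (\<lambda>n. w4 n j) xs)" using j by (simp add: power_simps comp_def)
    also have "map (\<lambda>n. w4 n j) xs = map (proj j) xs" using xs j by (auto simp: w4_def proj_def)
    finally show "proj j (funs (X4 E) f xs) = funs E f (map (proj j) xs)" .
  qed
  then show ?thesis using P by (simp add: H4_def homs_def X4_def cE)
qed


lemma H_sub: "h \<in> H4 \<Longrightarrow> \<exists>j\<in>J4. h = proj j"
proof -
  assume "h \<in> H4"
  then have hP: "h \<in> CX \<rightarrow>\<^sub>E {0,1}" and hh: "is_hom R (X4 E) E h"
    by (auto simp: H4_def homs_def X4_def cE)
  have hrel: "\<And>r ns. r \<in> rsyms R \<Longrightarrow> length ns = rar R r \<Longrightarrow> set ns \<subseteq> CX \<Longrightarrow>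
      (\<forall>i\<in>J4. rels E r (map (\<lambda>n. w4 n i) ns)) \<Longrightarrow> rels E r (map h ns)"
    using hh by (auto simp: is_hom_def X4_def power_simps comp_def)
  have hfun: "\<And>f ns. f \<in> fsyms R \<Longrightarrow> length ns = far R f \<Longrightarrow> set ns \<subseteq> CX \<Longrightarrow>
      h (enc4 (funs (power E J4) f (map w4 ns))) = funs E f (map h ns)"
    using hh by (auto simp: is_hom_def X4_def)
  have w4e: "w4 (enc4 g) i = g i" if "g \<in> M5" "i \<in> J4" for g i
    using M5_enc4[of g] that by (simp add: M5_def w4_def)
  have eCX: "enc4 g \<in> CX" if "g \<in> M5" for g using M5_enc4[of g] that by (simp add: M5_def)
  define \<psi> where "\<psi> = (\<lambda>g. h (enc4 g))"
  have "is_hom R (induced (power E C5) M5) E \<psi>"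
    unfolding is_hom_def induced_simps
  proof (intro conjI ballI allI impI)
    show "\<psi> \<in> M5 \<rightarrow> carrier E" using hP eCX by (auto simp: \<psi>_def cE PiE_iff Pi_iff)
  next
    fix r gs assume r: "r \<in> rsyms R" and "length gs = rar R r \<and> set gs \<subseteq> M5 \<and> rels (power E C5) r gs"
    then have l: "length gs = rar R r" and gs: "set gs \<subseteq> M5" and rg: "\<forall>i\<in>C5. rels E r (map (\<lambda>g. g i) gs)"
      by (auto simp: power_simps)
    have "\<forall>i\<in>J4. rels E r (map (\<lambda>n. w4 n i) (map enc4 gs))"
    proof
      fix i assume i: "i \<in> J4"
      have m: "map (\<lambda>n. w4 n i) (map enc4 gs) = map (\<lambda>g. g i) gs" using gs i w4e by auto
      have "i \<in> C5" using i by (auto simp: J4_def C5_def)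
      then have "rels E r (map (\<lambda>g. g i) gs)" using rg by blast
      then show "rels E r (map (\<lambda>n. w4 n i) (map enc4 gs))" unfolding m .
    qed
    moreover have "set (map enc4 gs) \<subseteq> CX" using gs eCX by auto
    ultimately have "rels E r (map h (map enc4 gs))" using hrel[OF r, of "map enc4 gs"] l by simp
    then show "rels E r (map \<psi> gs)" by (simp add: \<psi>_def comp_def)
  next
    fix f gs assume f: "f \<in> fsyms R" and "length gs = far R f \<and> set gs \<subseteq> M5"
    then have l: "length gs = far R f" and gs: "set gs \<subseteq> M5" by auto
    have ns: "set (map enc4 gs) \<subseteq> CX" using gs eCX by auto
    have "enc4 (funs (power E C5) f gs) = enc4 (funs (power E J4) f (map w4 (map enc4 gs)))"
    proof (rule enc4_cong)
      fix j :: nat assume j: "j < 4"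
      then have jj: "j \<in> C5" "j \<in> J4" by (auto simp: C5_def J4_def)
      have m: "map (\<lambda>g. g j) (map w4 (map enc4 gs)) = map (\<lambda>g. g j) gs" using gs jj w4e by auto
      have "funs (power E J4) f (map w4 (map enc4 gs)) j = funs E f (map (\<lambda>g. g j) (map w4 (map enc4 gs)))"
        using jj by (simp add: power_simps)
      also have "\<dots> = funs E f (map (\<lambda>g. g j) gs)" unfolding m ..
      also have "\<dots> = funs (power E C5) f gs j" using jj by (simp add: power_simps)
      finally show "funs (power E C5) f gs j = funs (power E J4) f (map w4 (map enc4 gs)) j" by simp
    qed
    then have "\<psi> (funs (power E C5) f gs) = funs E f (map h (map enc4 gs))"
      using hfun[OF f _ ns] l by (simp add: \<psi>_def)
    then show "\<psi> (funs (power E C5) f gs) = funs E f (map \<psi> gs)" by (simp add: \<psi>_def comp_def)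
  qed
  from S2[OF this] obtain x where x: "x \<in> C5" and ev: "\<forall>g\<in>M5. h (enc4 g) = g x"
    by (auto simp: \<psi>_def)
  show ?thesis
  proof (cases "x = 4")
    case True
    define z0 where "z0 = restrict (\<lambda>_. 0::nat) C5"
    define z1 where "z1 = restrict (\<lambda>y. if y = 4 then 1 else 0::nat) C5"
    have "z0 \<in> M5" unfolding M5_def homs_X5 z0_def
      by (simp add: valid_def C5_def)
    moreover have "z1 \<in> M5" unfolding M5_def homs_X5 z1_def
      by (simp add: valid_def C5_def)
    moreover have "enc4 z0 = enc4 z1" by (simp add: enc4_def z0_def z1_def C5_def)
    ultimately have "z0 4 = z1 4" using ev True by metis
    then show ?thesis by (simp add: z0_def z1_def C5_def)
  next
    case False
    then have xJ: "x \<in> J4" using x by (auto simp: C5_def J4_def)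
    have "h = proj x"
    proof
      fix n show "h n = proj x n"
      proof (cases "n \<in> CX")
        case True
        have "h n = h (enc4 (lift n))" using enc4_lift[OF True] by simp
        also have "\<dots> = lift n x" using ev lift_M5[OF True] by (simp add: M5_def)
        also have "\<dots> = proj x n" using xJ True by (simp add: lift_def proj_def C5_def J4_def)
        finally show ?thesis .
      next
        case False then show ?thesis using hP by (simp add: proj_def PiE_def extensional_def)
      qed
    qed
    with xJ show ?thesis by blast
  qed
qed

lemma contra: False
proof -
  define \<phi> where "\<phi> h = (if h = proj 3 then 0 else 1::nat)" for h
  have "is_hom L0 (induced (power S0 CX) H4) S0 \<phi>"
    unfolding is_hom_def induced_simps
  proof (intro conjI ballI allI impI)
    show "\<phi> \<in> H4 \<rightarrow> carrier S0" by (auto simp: \<phi>_def carrier_S0)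
  next
    fix f xs assume "f \<in> fsyms L0" then show "\<phi> (funs (power S0 CX) f xs) = funs S0 f (map \<phi> xs)"
      by (simp add: L0_def)
  next
    fix r xs assume r: "r \<in> rsyms L0" and "length xs = rar L0 r \<and> set xs \<subseteq> H4 \<and> rels (power S0 CX) r xs"
    then have l: "length xs = 3" and xs: "set xs \<subseteq> H4" and rx: "\<forall>n\<in>CX. rels S0 r (map (\<lambda>g. g n) xs)"
      by (auto simp: L0_def power_simps)
    from len3[OF l] obtain f g k where fgk: "xs = [f,g,k]" by blast
    show "rels S0 r (map \<phi> xs)"
    proof (rule ccontr)
      assume "\<not> rels S0 r (map \<phi> xs)"
      then have c: "\<phi> f = 1" "\<phi> k = 1" "\<phi> g \<noteq> 1" by (auto simp: fgk rels_S0)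
      have g3: "g = proj 3"
      proof (rule ccontr)
        assume "g \<noteq> proj 3" then have "\<phi> g = 1" unfolding \<phi>_def by simp
        with c(3) show False by simp
      qed
      have f3: "f \<noteq> proj 3"
      proof
        assume "f = proj 3" then have "\<phi> f = 0" unfolding \<phi>_def by simp
        with c(1) show False by simp
      qed
      have k3: "k \<noteq> proj 3"
      proof
        assume "k = proj 3" then have "\<phi> k = 0" unfolding \<phi>_def by simp
        with c(2) show False by simp
      qed
      obtain a where a: "a \<in> J4" "f = proj a" using H_sub xs fgk by auto
      obtain b where b: "b \<in> J4" "k = proj b" using H_sub xs fgk by auto
      have "a \<noteq> 3" using a(2) f3 by blast
      then have a': "a \<in> {0,1,2}" using a(1) by (auto simp: J4_def)
      have "b \<noteq> 3" using b(2) k3 by blast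
      then have b': "b \<in> {0,1,2}" using b(1) by (auto simp: J4_def)
      from wit[OF a' b'] obtain n where n: "n \<in> CX" "bt n a = 1" "bt n b = 1" "bt n 3 = 0" by blast
      have "rels S0 r [f n, g n, k n]" using rx n(1) fgk by simp
      then show False using n a(2) b(2) g3 by (simp add: rels_S0 proj_def)
    qed
  qed
  from sd2_X4[OF this] obtain n where n: "n \<in> CX" and ev: "\<forall>h\<in>H4. \<phi> h = h n" by blast
  have J: "0 \<in> J4" "1 \<in> J4" "2 \<in> J4" "3 \<in> J4" by (auto simp: J4_def)
  have pv: "proj j n = bt n j" for j using n by (simp add: proj_def)
  have "bt n 0 = 1"
  proof -
    have "\<phi> (proj 0) = proj 0 n" using ev proj_H[OF J(1)] by blast
    moreover have "\<phi> (proj 0) = 1" using proj_ne[of 0] by (simp add: \<phi>_def)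
    ultimately show ?thesis using pv by simp
  qed
  moreover have "bt n 1 = 1"
  proof -
    have "\<phi> (proj 1) = proj 1 n" using ev proj_H[OF J(2)] by blast
    moreover have "\<phi> (proj 1) = 1" using proj_ne[of 1] by (simp add: \<phi>_def)
    ultimately show ?thesis using pv by simp
  qed
  moreover have "bt n 2 = 1"
  proof -
    have "\<phi> (proj 2) = proj 2 n" using ev proj_H[OF J(3)] by blast
    moreover have "\<phi> (proj 2) = 1" using proj_ne[of 2] by (simp add: \<phi>_def)
    ultimately show ?thesis using pv by simp
  qed
  moreover have "bt n 3 = 0"
  proof -
    have "\<phi> (proj 3) = proj 3 n" using ev proj_H[OF J(4)] by blast
    moreover have "\<phi> (proj 3) = 0" by (simp add: \<phi>_def)
    ultimately show ?thesis using pv by simp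
  qed
  ultimately have "enc4 (bt n) = 7" by (simp add: enc4_def)
  with n enc4_bt show False by (simp add: CX_def)
qed

end

theorem mainTheorem17:
  shows "\<not> (\<exists>(R::lang) (E::nat struct).
             is_struct R E \<and> carrier E = {0, 1} \<and> dual_pair L0 S0 R E)"
  using contra unfolding dual_pair_def by blast

end
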